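(* Let $a=(a_{00},a_{01},a_{10},a_{11})$ have strictly positive entries, $a_\triangle=a_{01}+a_{10}$, $a_{++}=a_{00}+a_{01}+a_{10}+a_{11}$, and let $x_{++}\ge0$ be a fixed integer. Consider observed counts $n=(n_{00},n_{01},n_{10},n_{11})$ with known total $n_{++}$, $n_\triangle=n_{01}+n_{10}$, and sampling distribution $$f(n\mid\eta,\theta,\gamma)=\mathrm{Bin}(n_\triangle\mid n_{++},\eta)\,\mathrm{Bin}(n_{01}\mid n_\triangle,\theta)\,\mathrm{Bin}(n_{00}\mid n_{++}-n_\triangle,\gamma).$$ Let $p_H(\eta)=\mathrm{Beta}(\eta\mid a_\triangle,a_{++}-a_\triangle)$, $p_H(\theta)=\mathrm{Beta}(\theta\mid a_{01},a_{10})$, $p_H(\gamma)=\mathrm{Beta}(\gamma\mid a_{00},a_{11})$. Define the intrinsic prior under $H$ as $p^I_H(\eta,\theta,\gamma\mid H_0)=p_H(\gamma)\,p^I_H(\eta,\theta\mid H_0)$, where $$p^I_H(\eta,\theta\mid H_0)=p_H(\eta)p_H(\theta)\,E_{\eta,\theta}\!\left[\frac{B(a_{01},a_{10})}{2^{x_\triangle}B(a_{01}+x_{01},a_{10}+x_{10})}\right],$$ the expectation being over imaginary counts $(x_{01},x_{10},x_{++}-x_\triangle)$, $x_\triangle=x_{01}+x_{10}$, multinomial with $x_{++}$ trials and cell probabilities $(\eta\theta,\eta(1-\theta),1-\eta)$. Let $m^I_H(n)=\iiint f(n\mid\eta,\theta,\gamma)p^I_H(\eta,\theta,\gamma\mid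 H_0)\,d\eta\,d\theta\,d\gamma$, $m_{H_0}(n)=\iint f(n\mid\eta,1/2,\gamma)p_H(\eta)p_H(\gamma)\,d\eta\,d\gamma$ and $BF^I_{H,H_0}(n)=m^I_H(n)/m_{H_0}(n)$. Then $$BF^I_{H,H_0}(n)=\sum_{x_{01}}\sum_{x_{10}}\frac{x_{++}!}{x_{01}!\,x_{10}!\,(x_{++}-x_\triangle)!}\left(\frac14\right)^{x_{01}}\left(\frac14\right)^{x_{10}}\left(\frac12\right)^{x_{++}-x_\triangle}BF^M_{\eta\neq\frac12,\eta=\frac12}(x\mid n)\times BF^{Co}_{H,H_0}(n\mid x),$$ the sum being over integers $x_{01},x_{10}\ge0$ with $x_{01}+x_{10}\le x_{++}$, where $$BF^{Co}_{H,H_0}(n\mid x)=2^{n_\triangle}\frac{B(a_{01}+x_{01}+n_{01},\,a_\triangle-a_{01}+x_\triangle-x_{01}+n_\triangle-n_{01})}{B(a_{01}+x_{01},\,a_\triangle-a_{01}+x_\triangle-x_{01})}$$ and $$BF^M_{\eta\neq\frac12,\eta=\frac12}(x\mid n)=2^{x_{++}}\frac{B(a_\triangle+x_\triangle+n_\triangle,\,a_{++}-a_\triangle+x_{++}-x_\triangle+n_{++}-n_\triangle)}{B(a_\triangle+n_\triangle,\,a_{++}-a_\triangle+n_{++}-n_\triangle)}.$$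
   Context: $\mathrm{Bin}(y\mid m,\psi)=\binom{m}{y}\psi^y(1-\psi)^{m-y}$; $B(A,B)=\int_0^1t^{A-1}(1-t)^{B-1}dt$ is the Beta function and $\mathrm{Beta}(u\mid A,B)=u^{A-1}(1-u)^{B-1}/B(A,B)$ the Beta density. Setting: a $2\times2$ matched-pair table with cell probabilities $\pi\sim\mathrm{Dir}(a)$ under $H$, parametrized by $\eta=\pi_{01}+\pi_{10}$, $\theta=\pi_{01}/(\pi_{01}+\pi_{10})$, $\gamma=\pi_{00}/(\pi_{00}+\pi_{11})$; the hypotheses are $H:\theta\neq1/2$ and $H_0:\theta=1/2$, with the prior on $(\eta,\gamma)$ under $H_0$ equal to its $H$-marginal. *)

theory Defs
  imports "HOL-Analysis.Analysis"
begin

definition Bin :: "nat \<Rightarrow> nat \<Rightarrow> real \<Rightarrow> real" where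
  "Bin y m \<psi> = real (m choose y) * \<psi> ^ y * (1 - \<psi>) ^ (m - y)"

text \<open>Beta density Beta(u | A, B), using the library Beta function
  (equal to the Euler integral for positive arguments).\<close>
definition beta_dens :: "real \<Rightarrow> real \<Rightarrow> real \<Rightarrow> real" where
  "beta_dens A B u = u powr (A - 1) * (1 - u) powr (B - 1) / Beta A B"

definition multi3 :: "nat \<Rightarrow> nat \<Rightarrow> nat \<Rightarrow> real" where
  "multi3 N i j = fact N / (fact i * fact j * fact (N - i - j))"

definition xset :: "nat \<Rightarrow> (nat \<times> nat) set" where
  "xset xpp = {(i, j). i + j \<le> xpp}"

definition samp :: "nat \<Rightarrow> nat \<Rightarrow> nat \<Rightarrow> nat \<Rightarrow> real \<Rightarrow> real \<Rightarrow> real \<Rightarrow> real" where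
  "samp n00 n01 n10 n11 \<eta> \<theta> \<gamma> =
     (let npp = n00 + n01 + n10 + n11; nd = n01 + n10 in
      Bin nd npp \<eta> * Bin n01 nd \<theta> * Bin n00 (npp - nd) \<gamma>)"

definition pI_eta_theta :: "real \<Rightarrow> real \<Rightarrow> real \<Rightarrow> real \<Rightarrow> nat \<Rightarrow> real \<Rightarrow> real \<Rightarrow> real" where
  "pI_eta_theta a00 a01 a10 a11 xpp \<eta> \<theta> =
     (let ad = a01 + a10; app = a00 + a01 + a10 + a11 in
      beta_dens ad (app - ad) \<eta> * beta_dens a01 a10 \<theta> *
      (\<Sum>(x01, x10)\<in>xset xpp.
          multi3 xpp x01 x10 * (\<eta> * \<theta>) ^ x01 * (\<eta> * (1 - \<theta>)) ^ x10
            * (1 - \<eta>) ^ (xpp - (x01 + x10))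
          * (Beta a01 a10 / (2 ^ (x01 + x10) * Beta (a01 + real x01) (a10 + real x10)))))"

definition pI :: "real \<Rightarrow> real \<Rightarrow> real \<Rightarrow> real \<Rightarrow> nat \<Rightarrow> real \<Rightarrow> real \<Rightarrow> real \<Rightarrow> real" where
  "pI a00 a01 a10 a11 xpp \<eta> \<theta> \<gamma> =
     beta_dens a00 a11 \<gamma> * pI_eta_theta a00 a01 a10 a11 xpp \<eta> \<theta>"

definition mI :: "real \<Rightarrow> real \<Rightarrow> real \<Rightarrow> real \<Rightarrow> nat \<Rightarrow> nat \<Rightarrow> nat \<Rightarrow> nat \<Rightarrow> nat \<Rightarrow> real" where
  "mI a00 a01 a10 a11 xpp n00 n01 n10 n11 =
     (LBINT \<eta>:{0..1}. LBINT \<theta>:{0..1}. LBINT \<gamma>:{0..1}.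
        samp n00 n01 n10 n11 \<eta> \<theta> \<gamma> * pI a00 a01 a10 a11 xpp \<eta> \<theta> \<gamma>)"

definition m0 :: "real \<Rightarrow> real \<Rightarrow> real \<Rightarrow> real \<Rightarrow> nat \<Rightarrow> nat \<Rightarrow> nat \<Rightarrow> nat \<Rightarrow> real" where
  "m0 a00 a01 a10 a11 n00 n01 n10 n11 =
     (let ad = a01 + a10; app = a00 + a01 + a10 + a11 in
      (LBINT \<eta>:{0..1}. LBINT \<gamma>:{0..1}.
        samp n00 n01 n10 n11 \<eta> (1/2) \<gamma> * beta_dens ad (app - ad) \<eta> * beta_dens a00 a11 \<gamma>))"

definition BF_I :: "real \<Rightarrow> real \<Rightarrow> real \<Rightarrow> real \<Rightarrow> nat \<Rightarrow> nat \<Rightarrow> nat \<Rightarrow> nat \<Rightarrow> nat \<Rightarrow> real" where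
  "BF_I a00 a01 a10 a11 xpp n00 n01 n10 n11 =
     mI a00 a01 a10 a11 xpp n00 n01 n10 n11 / m0 a00 a01 a10 a11 n00 n01 n10 n11"

definition BF_Co :: "real \<Rightarrow> real \<Rightarrow> real \<Rightarrow> real \<Rightarrow> nat \<Rightarrow> nat \<Rightarrow> nat \<Rightarrow> nat \<Rightarrow> nat \<Rightarrow> nat \<Rightarrow> real" where
  "BF_Co a00 a01 a10 a11 x01 x10 n00 n01 n10 n11 =
     (let ad = a01 + a10; xd = x01 + x10; nd = n01 + n10 in
      2 ^ nd * Beta (a01 + real x01 + real n01) (ad - a01 + real xd - real x01 + real nd - real n01)
             / Beta (a01 + real x01) (ad - a01 + real xd - real x01))"

definition BF_M :: "real \<Rightarrow> real \<Rightarrow> real \<Rightarrow> real \<Rightarrow> nat \<Rightarrow> nat \<Rightarrow> nat \<Rightarrow> nat \<Rightarrow> nat \<Rightarrow> nat \<Rightarrow> nat \<Rightarrow> real" where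
  "BF_M a00 a01 a10 a11 xpp x01 x10 n00 n01 n10 n11 =
     (let ad = a01 + a10; app = a00 + a01 + a10 + a11; xd = x01 + x10;
          nd = n01 + n10; npp = n00 + n01 + n10 + n11 in
      2 ^ xpp * Beta (ad + real xd + real nd) (app - ad + real xpp - real xd + real npp - real nd)
              / Beta (ad + real nd) (app - ad + real npp - real nd))"

end

theory Submission
  imports Defs
begin

lemma pow_powr: "0 \<le> (t::real) \<Longrightarrow> t ^ k * t powr c = t powr (c + real k)"
  by (cases "t = 0") (auto simp: powr_add powr_realpow)

lemma beta_mom:
  fixes A B :: real assumes "A > 0" "B > 0"
  shows "set_integrable lborel {0..1} (\<lambda>t. t^k * (1-t)^l * (t powr (A-1) * (1-t) powr (B-1)))"
    and "(LBINT t:{0..1}. t^k * (1-t)^l * (t powr (A-1) * (1-t) powr (B-1))) = Beta (A + real k) (B + real l)"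
proof -
  have pw: "t^k * (1-t)^l * (t powr (A-1) * (1-t) powr (B-1)) = t powr (A + real k - 1) * (1-t) powr (B + real l - 1)"
    if "t \<in> {0..1}" for t :: real
  proof -
    have "t^k * (1-t)^l * (t powr (A-1) * (1-t) powr (B-1)) = (t^k * t powr (A-1)) * ((1-t)^l * (1-t) powr (B-1))"
      by (simp add: mult_ac)
    also have "\<dots> = t powr (A - 1 + real k) * (1-t) powr (B - 1 + real l)"
      using that by (simp add: pow_powr)
    finally show ?thesis by (simp add: algebra_simps)
  qed
  have i: "set_integrable lborel {0..1} (\<lambda>t. t powr (A + real k - 1) * (1-t) powr (B + real l - 1))"
    using integrable_Beta[of "A + real k" "B + real l"] assms by simp
  show "set_integrable lborel {0..1} (\<lambda>t. t^k * (1-t)^l * (t powr (A-1) * (1-t) powr (B-1)))"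
    using i by (subst set_integrable_cong[OF refl refl pw]) auto
  have "(LBINT t:{0..1}. t^k * (1-t)^l * (t powr (A-1) * (1-t) powr (B-1)))
      = (LBINT t:{0..1}. t powr (A + real k - 1) * (1-t) powr (B + real l - 1))"
    by (rule set_lebesgue_integral_cong) (auto simp: pw)
  also have "\<dots> = integral {0..1} (\<lambda>t. t powr (A + real k - 1) * (1-t) powr (B + real l - 1))"
    using set_borel_integral_eq_integral(2)[OF i] .
  also have "\<dots> = Beta (A + real k) (B + real l)"
    using has_integral_Beta_real[of "A + real k" "B + real l"] assms
    by (intro integral_unique) simp
  finally show "(LBINT t:{0..1}. t^k * (1-t)^l * (t powr (A-1) * (1-t) powr (B-1))) = Beta (A + real k) (B + real l)" .
qed

lemma set_integral_sum':
  fixes f :: "'i \<Rightarrow> 'a \<Rightarrow> real"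
  assumes "finite S" "\<And>i. i \<in> S \<Longrightarrow> set_integrable M A (f i)"
  shows "(LINT x:A|M. (\<Sum>i\<in>S. f i x)) = (\<Sum>i\<in>S. LINT x:A|M. f i x)"
proof -
  have "(\<lambda>x. indicator A x *\<^sub>R (\<Sum>i\<in>S. f i x)) = (\<lambda>x. \<Sum>i\<in>S. indicator A x *\<^sub>R f i x)"
    by (rule ext) (rule scaleR_sum_right)
  then show ?thesis
    using assms unfolding set_lebesgue_integral_def set_integrable_def
    by (simp only:) (rule Bochner_Integration.integral_sum, auto)
qed

lemma Beta_pos: "a > 0 \<Longrightarrow> b > 0 \<Longrightarrow> Beta a b > (0::real)"
  by (simp add: Beta_def)

lemma finite_xset: "finite (xset n)"
proof -
  have "xset n \<subseteq> {0..n} \<times> {0..n}" by (auto simp: xset_def)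
  then show ?thesis by (rule finite_subset) auto
qed

lemma gamma_step:
  assumes "a00 > 0" "a11 > 0"
  shows "(LBINT \<gamma>:{0..1}. samp n00 n01 n10 n11 \<eta> \<theta> \<gamma> * pI a00 a01 a10 a11 xpp \<eta> \<theta> \<gamma>)
    = Bin (n01+n10) (n00+n01+n10+n11) \<eta> * Bin n01 (n01+n10) \<theta> * pI_eta_theta a00 a01 a10 a11 xpp \<eta> \<theta>
      * (real ((n00+n11) choose n00) * Beta (a00 + real n00) (a11 + real n11) / Beta a00 a11)"
proof -
  have eq: "(\<lambda>\<gamma>. samp n00 n01 n10 n11 \<eta> \<theta> \<gamma> * pI a00 a01 a10 a11 xpp \<eta> \<theta> \<gamma>)
    = (\<lambda>\<gamma>. (Bin (n01+n10) (n00+n01+n10+n11) \<eta> * Bin n01 (n01+n10) \<theta> * pI_eta_theta a00 a01 a10 a11 xpp \<eta> \<theta>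
          * (real ((n00+n11) choose n00) / Beta a00 a11))
       * (\<gamma>^n00 * (1-\<gamma>)^n11 * (\<gamma> powr (a00-1) * (1-\<gamma>) powr (a11-1))))"
    by (rule ext) (simp add: samp_def pI_def Bin_def beta_dens_def Let_def)
  show ?thesis
    unfolding eq set_integral_mult_right beta_mom(2)[OF assms] by simp
qed

lemma theta_step:
  fixes G :: real
  assumes "a01 > 0" "a10 > 0"
  shows "(LBINT \<theta>:{0..1}. Bin (n01+n10) (n00+n01+n10+n11) \<eta> * Bin n01 (n01+n10) \<theta> * pI_eta_theta a00 a01 a10 a11 xpp \<eta> \<theta> * G)
    = (\<Sum>(i,j)\<in>xset xpp. Bin (n01+n10) (n00+n01+n10+n11) \<eta> * G * real ((n01+n10) choose n01)
          * beta_dens (a01+a10) (a00+a01+a10+a11-(a01+a10)) \<eta> * multi3 xpp i j * \<eta>^(i+j) * (1-\<eta>)^(xpp-(i+j))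
          / (2^(i+j) * Beta (a01 + real i) (a10 + real j))
        * Beta (a01 + real (n01+i)) (a10 + real (n10+j)))"
proof -
  let ?K = "\<lambda>i j. Bin (n01+n10) (n00+n01+n10+n11) \<eta> * G * real ((n01+n10) choose n01)
          * beta_dens (a01+a10) (a00+a01+a10+a11-(a01+a10)) \<eta> * multi3 xpp i j * \<eta>^(i+j) * (1-\<eta>)^(xpp-(i+j))
          / (2^(i+j) * Beta (a01 + real i) (a10 + real j))"
  let ?h = "\<lambda>i j \<theta>. \<theta>^(n01+i) * (1-\<theta>)^(n10+j) * (\<theta> powr (a01-1) * (1-\<theta>) powr (a10-1))"
  have B0: "Beta a01 a10 \<noteq> 0" using Beta_pos[OF assms] by simp
  have pw: "Bin (n01+n10) (n00+n01+n10+n11) \<eta> * Bin n01 (n01+n10) \<theta> * pI_eta_theta a00 a01 a10 a11 xpp \<eta> \<theta> * G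
      = (\<Sum>(i,j)\<in>xset xpp. ?K i j * ?h i j \<theta>)" for \<theta>
  proof -
    have "Bin (n01+n10) (n00+n01+n10+n11) \<eta> * Bin n01 (n01+n10) \<theta> * pI_eta_theta a00 a01 a10 a11 xpp \<eta> \<theta> * G
      = (\<Sum>(i,j)\<in>xset xpp. Bin (n01+n10) (n00+n01+n10+n11) \<eta> * Bin n01 (n01+n10) \<theta> *
          (beta_dens (a01+a10) (a00+a01+a10+a11-(a01+a10)) \<eta> * beta_dens a01 a10 \<theta> *
          (multi3 xpp i j * (\<eta> * \<theta>) ^ i * (\<eta> * (1 - \<theta>)) ^ j
            * (1 - \<eta>) ^ (xpp - (i + j))
          * (Beta a01 a10 / (2 ^ (i + j) * Beta (a01 + real i) (a10 + real j))))) * G)"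
      unfolding pI_eta_theta_def Let_def sum_distrib_left sum_distrib_right
      by (simp add: case_prod_unfold)
    also have "\<dots> = (\<Sum>(i,j)\<in>xset xpp. ?K i j * ?h i j \<theta>)"
    proof (rule sum.cong[OF refl], clarify)
      fix i j
      show "Bin (n01+n10) (n00+n01+n10+n11) \<eta> * Bin n01 (n01+n10) \<theta> *
          (beta_dens (a01+a10) (a00+a01+a10+a11-(a01+a10)) \<eta> * beta_dens a01 a10 \<theta> *
          (multi3 xpp i j * (\<eta> * \<theta>) ^ i * (\<eta> * (1 - \<theta>)) ^ j
            * (1 - \<eta>) ^ (xpp - (i + j))
          * (Beta a01 a10 / (2 ^ (i + j) * Beta (a01 + real i) (a10 + real j))))) * G = ?K i j * ?h i j \<theta>"
        using B0 unfolding power_mult_distrib power_add by (simp add: Bin_def beta_dens_def field_simps)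
    qed
    finally show ?thesis .
  qed
  have "(LBINT \<theta>:{0..1}. Bin (n01+n10) (n00+n01+n10+n11) \<eta> * Bin n01 (n01+n10) \<theta> * pI_eta_theta a00 a01 a10 a11 xpp \<eta> \<theta> * G)
     = (LBINT \<theta>:{0..1}. (\<Sum>p\<in>xset xpp. ?K (fst p) (snd p) * ?h (fst p) (snd p) \<theta>))"
    unfolding pw by (simp add: case_prod_unfold)
  also have "\<dots> = (\<Sum>p\<in>xset xpp. LBINT \<theta>:{0..1}. ?K (fst p) (snd p) * ?h (fst p) (snd p) \<theta>)"
    by (rule set_integral_sum'[OF finite_xset]) (auto intro!: beta_mom(1) assms)
  also have "\<dots> = (\<Sum>p\<in>xset xpp. ?K (fst p) (snd p) * Beta (a01 + real (n01 + fst p)) (a10 + real (n10 + snd p)))"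
    by (simp only: set_integral_mult_right beta_mom(2)[OF assms])
  finally show ?thesis by (simp add: case_prod_unfold)
qed

lemma eta_step:
  fixes G :: real
  assumes "a00 > 0" "a01 > 0" "a10 > 0" "a11 > 0"
  shows "(LBINT \<eta>:{0..1}. (\<Sum>(i,j)\<in>xset xpp. Bin (n01+n10) (n00+n01+n10+n11) \<eta> * G * real ((n01+n10) choose n01)
          * beta_dens (a01+a10) (a00+a01+a10+a11-(a01+a10)) \<eta> * multi3 xpp i j * \<eta>^(i+j) * (1-\<eta>)^(xpp-(i+j))
          / (2^(i+j) * Beta (a01 + real i) (a10 + real j))
        * Beta (a01 + real (n01+i)) (a10 + real (n10+j))))
    = (\<Sum>(i,j)\<in>xset xpp. real ((n00+n01+n10+n11) choose (n01+n10)) * G * real ((n01+n10) choose n01)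
          * multi3 xpp i j / (2^(i+j) * Beta (a01 + real i) (a10 + real j))
          * Beta (a01 + real (n01+i)) (a10 + real (n10+j)) / Beta (a01+a10) (a00+a01+a10+a11-(a01+a10))
          * Beta (a01+a10 + real ((n01+n10) + (i+j))) (a00+a01+a10+a11-(a01+a10) + real (((n00+n01+n10+n11) - (n01+n10)) + (xpp-(i+j)))))"
proof -
  let ?A = "a01+a10" and ?B = "a00+a01+a10+a11-(a01+a10)"
  have A: "?A > 0" and B: "?B > 0" using assms by auto
  let ?c = "\<lambda>i j. real ((n00+n01+n10+n11) choose (n01+n10)) * G * real ((n01+n10) choose n01)
          * multi3 xpp i j / (2^(i+j) * Beta (a01 + real i) (a10 + real j))
          * Beta (a01 + real (n01+i)) (a10 + real (n10+j)) / Beta ?A ?B"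
  let ?h = "\<lambda>i j \<eta>. \<eta>^((n01+n10) + (i+j)) * (1-\<eta>)^(((n00+n01+n10+n11) - (n01+n10)) + (xpp-(i+j)))
       * (\<eta> powr (?A-1) * (1-\<eta>) powr (?B-1))"
  have pw: "(\<Sum>(i,j)\<in>xset xpp. Bin (n01+n10) (n00+n01+n10+n11) \<eta> * G * real ((n01+n10) choose n01)
          * beta_dens (a01+a10) (a00+a01+a10+a11-(a01+a10)) \<eta> * multi3 xpp i j * \<eta>^(i+j) * (1-\<eta>)^(xpp-(i+j))
          / (2^(i+j) * Beta (a01 + real i) (a10 + real j))
        * Beta (a01 + real (n01+i)) (a10 + real (n10+j)))
     = (\<Sum>p\<in>xset xpp. ?c (fst p) (snd p) * ?h (fst p) (snd p) \<eta>)" for \<eta>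
    unfolding case_prod_unfold
  proof (rule sum.cong[OF refl])
    fix p :: "nat \<times> nat"
    show "Bin (n01+n10) (n00+n01+n10+n11) \<eta> * G * real ((n01+n10) choose n01)
          * beta_dens (a01+a10) (a00+a01+a10+a11-(a01+a10)) \<eta> * multi3 xpp (fst p) (snd p) * \<eta>^(fst p+snd p) * (1-\<eta>)^(xpp-(fst p+snd p))
          / (2^(fst p+snd p) * Beta (a01 + real (fst p)) (a10 + real (snd p)))
        * Beta (a01 + real (n01+fst p)) (a10 + real (n10+snd p))
        = ?c (fst p) (snd p) * ?h (fst p) (snd p) \<eta>"
      unfolding Bin_def beta_dens_def power_add by (simp add: field_simps)
  qed
  have "(LBINT \<eta>:{0..1}. (\<Sum>(i,j)\<in>xset xpp. Bin (n01+n10) (n00+n01+n10+n11) \<eta> * G * real ((n01+n10) choose n01)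
          * beta_dens (a01+a10) (a00+a01+a10+a11-(a01+a10)) \<eta> * multi3 xpp i j * \<eta>^(i+j) * (1-\<eta>)^(xpp-(i+j))
          / (2^(i+j) * Beta (a01 + real i) (a10 + real j))
        * Beta (a01 + real (n01+i)) (a10 + real (n10+j))))
     = (LBINT \<eta>:{0..1}. (\<Sum>p\<in>xset xpp. ?c (fst p) (snd p) * ?h (fst p) (snd p) \<eta>))"
    unfolding pw ..
  also have "\<dots> = (\<Sum>p\<in>xset xpp. LBINT \<eta>:{0..1}. ?c (fst p) (snd p) * ?h (fst p) (snd p) \<eta>)"
    by (rule set_integral_sum'[OF finite_xset], rule set_integrable_mult_right, rule beta_mom(1)[OF A B])
  also have "\<dots> = (\<Sum>p\<in>xset xpp. ?c (fst p) (snd p) * Beta (?A + real ((n01+n10) + (fst p + snd p))) (?B + real (((n00+n01+n10+n11) - (n01+n10)) + (xpp-(fst p + snd p)))))"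
    by (simp only: set_integral_mult_right beta_mom(2)[OF A B])
  finally show ?thesis by (simp add: case_prod_unfold)
qed

lemma m0_step:
  assumes "a00 > 0" "a01 > 0" "a10 > 0" "a11 > 0"
  shows "m0 a00 a01 a10 a11 n00 n01 n10 n11 = real ((n00+n01+n10+n11) choose (n01+n10)) * real ((n01+n10) choose n01)
     * (1/2)^(n01+n10) * (real ((n00+n11) choose n00) * Beta (a00 + real n00) (a11 + real n11) / Beta a00 a11)
     / Beta (a01+a10) (a00+a01+a10+a11-(a01+a10))
     * Beta (a01+a10 + real (n01+n10)) (a00+a01+a10+a11-(a01+a10) + real ((n00+n01+n10+n11) - (n01+n10)))"
proof -
  let ?A = "a01+a10" and ?B = "a00+a01+a10+a11-(a01+a10)"
  have A: "?A > 0" and B: "?B > 0" using assms by auto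
  let ?Gc = "real ((n00+n11) choose n00) * Beta (a00 + real n00) (a11 + real n11) / Beta a00 a11"
  have inner: "(LBINT \<gamma>:{0..1}. samp n00 n01 n10 n11 \<eta> (1/2) \<gamma> * beta_dens ?A ?B \<eta> * beta_dens a00 a11 \<gamma>)
     = (real ((n00+n01+n10+n11) choose (n01+n10)) * real ((n01+n10) choose n01) * (1/2)^(n01+n10) * ?Gc / Beta ?A ?B)
       * (\<eta>^(n01+n10) * (1-\<eta>)^((n00+n01+n10+n11) - (n01+n10)) * (\<eta> powr (?A-1) * (1-\<eta>) powr (?B-1)))" for \<eta>
  proof -
    have eq: "(\<lambda>\<gamma>. samp n00 n01 n10 n11 \<eta> (1/2) \<gamma> * beta_dens ?A ?B \<eta> * beta_dens a00 a11 \<gamma>)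
      = (\<lambda>\<gamma>. (Bin (n01+n10) (n00+n01+n10+n11) \<eta> * real ((n01+n10) choose n01) * (1/2)^(n01+n10) * beta_dens ?A ?B \<eta>
           * (real ((n00+n11) choose n00) / Beta a00 a11))
         * (\<gamma>^n00 * (1-\<gamma>)^n11 * (\<gamma> powr (a00-1) * (1-\<gamma>) powr (a11-1))))"
      by (rule ext) (simp add: samp_def Bin_def beta_dens_def Let_def power_add field_simps)
    show ?thesis
      unfolding eq set_integral_mult_right beta_mom(2)[OF assms(1,4)]
      by (simp add: Bin_def beta_dens_def field_simps)
  qed
  show ?thesis
    unfolding m0_def Let_def inner set_integral_mult_right beta_mom(2)[OF A B] by simp
qed

theorem proposition9:
  fixes a00 a01 a10 a11 :: real and xpp n00 n01 n10 n11 :: nat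
  assumes "a00 > 0" and "a01 > 0" and "a10 > 0" and "a11 > 0"
  shows "BF_I a00 a01 a10 a11 xpp n00 n01 n10 n11 =
    (\<Sum>(x01, x10)\<in>xset xpp.
       multi3 xpp x01 x10 * (1/4) ^ x01 * (1/4) ^ x10 * (1/2) ^ (xpp - (x01 + x10))
       * BF_M a00 a01 a10 a11 xpp x01 x10 n00 n01 n10 n11
       * BF_Co a00 a01 a10 a11 x01 x10 n00 n01 n10 n11)"
proof -
  let ?Gc = "real ((n00+n11) choose n00) * Beta (a00 + real n00) (a11 + real n11) / Beta a00 a11"
  let ?A = "a01+a10" and ?B = "a00+a01+a10+a11-(a01+a10)"
  let ?nd = "n01+n10" and ?npp = "n00+n01+n10+n11"
  let ?Ce = "real (?npp choose ?nd)" and ?Ct = "real (?nd choose n01)"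
  have A: "?A > 0" and B: "?B > 0" using assms by auto
  have Gc: "?Gc \<noteq> 0"
    using assms Beta_pos[of "a00 + real n00" "a11 + real n11"] Beta_pos[of a00 a11] by simp
  have Ce: "?Ce \<noteq> 0" and Ct: "?Ct \<noteq> 0" by simp_all
  have BA: "Beta ?A ?B \<noteq> 0" using Beta_pos[OF A B] by simp
  have Bnd: "Beta (?A + real ?nd) (?B + real (?npp - ?nd)) \<noteq> 0"
    using Beta_pos[of "?A + real ?nd" "?B + real (?npp - ?nd)"] A B by simp
  have mI: "mI a00 a01 a10 a11 xpp n00 n01 n10 n11 =
    (\<Sum>(i,j)\<in>xset xpp. ?Ce * ?Gc * ?Ct
          * multi3 xpp i j / (2^(i+j) * Beta (a01 + real i) (a10 + real j))
          * Beta (a01 + real (n01+i)) (a10 + real (n10+j)) / Beta ?A ?B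
          * Beta (?A + real (?nd + (i+j))) (?B + real ((?npp - ?nd) + (xpp-(i+j)))))"
    unfolding mI_def gamma_step[OF assms(1,4)] theta_step[OF assms(2,3)] eta_step[OF assms] ..
  have m0: "m0 a00 a01 a10 a11 n00 n01 n10 n11 = ?Ce * ?Ct * (1/2)^?nd * ?Gc / Beta ?A ?B
     * Beta (?A + real ?nd) (?B + real (?npp - ?nd))"
    using m0_step[OF assms] .
  show ?thesis
    unfolding BF_I_def mI m0 sum_divide_distrib
  proof (rule sum.cong[OF refl], clarify)
    fix i j assume ij: "(i, j) \<in> xset xpp"
    then have le: "i + j \<le> xpp" by (simp add: xset_def)
    have e1: "Beta (a01 + a10 + real (i + j) + real (n01 + n10))
          (a00 + a01 + a10 + a11 - (a01 + a10) + real xpp - real (i + j) + real (n00 + n01 + n10 + n11) - real (n01 + n10))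
        = Beta (?A + real (?nd + (i+j))) (?B + real ((?npp - ?nd) + (xpp-(i+j))))"
      using le by (intro arg_cong2[where f=Beta]) (simp_all add: of_nat_diff)
    have e2: "Beta (a01 + a10 + real (n01 + n10)) (a00 + a01 + a10 + a11 - (a01 + a10) + real (n00 + n01 + n10 + n11) - real (n01 + n10))
        = Beta (?A + real ?nd) (?B + real (?npp - ?nd))"
      by (intro arg_cong2[where f=Beta]) (simp_all add: of_nat_diff)
    have e3: "Beta (a01 + real i + real n01) (a01 + a10 - a01 + real (i + j) - real i + real (n01 + n10) - real n01)
        = Beta (a01 + real (n01+i)) (a10 + real (n10+j))"
      by (intro arg_cong2[where f=Beta]) simp_all
    have e4: "Beta (a01 + real i) (a01 + a10 - a01 + real (i + j) - real i) = Beta (a01 + real i) (a10 + real j)"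
      by (intro arg_cong2[where f=Beta]) simp_all
    have Bij: "Beta (a01 + real i) (a10 + real j) \<noteq> 0" using Beta_pos[of "a01 + real i" "a10 + real j"] assms by simp
    have p: "(1/4::real)^i * (1/4)^j * (1/2)^(xpp-(i+j)) * 2^xpp = 1 / 2^(i+j)"
    proof -
      have "(2::real)^xpp = 2^(i+j) * 2^(xpp-(i+j))" using le by (simp add: power_add[symmetric])
      moreover have "(1/4::real)^i = 1 / (2^i * 2^i)" "(1/4::real)^j = 1 / (2^j*2^j)"
        by (simp_all add: power_mult_distrib[symmetric] power_one_over)
      ultimately show ?thesis by (simp add: power_add field_simps)
    qed
    show "?Ce * ?Gc * ?Ct
          * multi3 xpp i j / (2^(i+j) * Beta (a01 + real i) (a10 + real j))
          * Beta (a01 + real (n01+i)) (a10 + real (n10+j)) / Beta ?A ?B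
          * Beta (?A + real (?nd + (i+j))) (?B + real ((?npp - ?nd) + (xpp-(i+j))))
        / (?Ce * ?Ct * (1/2)^?nd * ?Gc / Beta ?A ?B * Beta (?A + real ?nd) (?B + real (?npp - ?nd)))
      = multi3 xpp i j * (1/4) ^ i * (1/4) ^ j * (1/2) ^ (xpp - (i + j))
       * BF_M a00 a01 a10 a11 xpp i j n00 n01 n10 n11
       * BF_Co a00 a01 a10 a11 i j n00 n01 n10 n11"
      unfolding BF_M_def BF_Co_def Let_def e1 e2 e3 e4
      using Gc Ce Ct BA Bnd Bij p
      by (simp add: field_simps power_one_over)
  qed
qed

end
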